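(* With notation as in the context, for all $1\le i,j,h,k\le m+n$, $r\ge1$ and $x,y_1,\dots,y_r\in \mathrm{Mat}_\ell$, $$[t_{ij;\mathfrak{b}}(x),t_{hk;\mathfrak{b}}(y_1\otimes\cdots\otimes y_r)]=(-1)^{|i||j|+|i||h|+|j||h|}\sum_{s=1}^r\Big(t_{hj;\mathfrak{b}}(y_1\otimes\cdots\otimes y_{s-1})\,t_{ik;\mathfrak{b}}(xy_s\otimes y_{s+1}\otimes\cdots\otimes y_r)-t_{hj;\mathfrak{b}}(y_1\otimes\cdots\otimes y_{s-1}\otimes y_sx)\,t_{ik;\mathfrak{b}}(y_{s+1}\otimes\cdots\otimes y_r)\Big),$$ where $xy_s$, $y_sx$ are matrix products in $\mathrm{Mat}_\ell$, the bracket is the supercommutator in $U(\mathfrak{gl}_{M|N})$, and an empty tensor is interpreted as $1\in T(\mathrm{Mat}_\ell)$.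
   Context: Let $m,n,\ell$ be non-negative integers and $\mathfrak{b}=(\mathfrak{b}_1,\dots,\mathfrak{b}_{m+n})$ a sequence with $m$ entries $\delta$ and $n$ entries $\epsilon$; $|i|=\bar0$ if $\mathfrak{b}_i=\delta$, $|i|=\bar1$ if $\mathfrak{b}_i=\epsilon$. Let $\pi$ be a rectangular array of boxes with $m+n$ rows and $\ell$ columns, row $i$ having parity $|i|$; for $1\le i\le m+n$, $1\le c\le\ell$ let $i\star c$ denote the box in row $i$ (counted from the top) and column $c$ (counted from the left). Let $V=\mathbb{C}^{M|N}$ ($M=m\ell$, $N=n\ell$) have homogeneous basis $\{v_a\}$ indexed by boxes, $v_a$ of parity that of its row, and $\mathfrak{gl}_{M|N}=\mathrm{End}(V)$ with matrix units $e_{a,b}$. $\mathrm{Mat}_\ell$ is the space of complex $\ell\times\ell$ matrices with matrix units $e_{a,c}$, and $T(\mathrm{Mat}_\ell)$ its tensor algebra. For $1\le i,j\le m+n$ define the linear map $t_{ij;\mathfrak{b}}:T(\mathrm{Mat}_\ell)\to U(\mathfrak{gl}_{M|N})$ by $t_{ij;\mathfrak{b}}(1)=\delta_{ij}$, $t_{ij;\mathfrak{b}}(e_{a,c})=(-1)^{|i|}e_{i\star a,\,j\star c}$ (extended linearly to $\mathrm{Mat}_\ell$), and $t_{ij;\mathfrak{b}}(x_1\otimes\cdots\otimes x_r)=\sum_{1\le i_1,\dots,i_{r-1}\le m+n}t_{ii_1;\mathfrak{b}}(x_1)t_{i_1i_2;\mathfrak{b}}(x_2)\cdots t_{i_{r-1}j;\mathfrak{b}}(x_r)$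 for $x_1,\dots,x_r\in\mathrm{Mat}_\ell$. *)

theory Defs
  imports "HOL-Library.Function_Algebras" "Jordan_Normal_Form.Matrix"
begin

text \<open>The sequence b: entries delta (Dl, even) and epsilon (Ep, odd).
  Rows are numbered 1..m+n; row i has symbol bb ! (i - 1).\<close>
datatype bsym = Dl | Ep

definition par :: "bsym list \<Rightarrow> nat \<Rightarrow> nat" where
  "par bb i = (if bb ! (i - 1) = Ep then 1 else 0)"

text \<open>Boxes i*c are pairs (row, column), rows 1..m+n, columns 1..l.
  Generators of U(gl_{M|N}) are the matrix units e_{a,b}, indexed by pairs of boxes.\<close>
type_synonym box = "nat \<times> nat"
type_synonym gen = "box \<times> box"

text \<open>Free associative algebra on the generators: functions from words to complex
  coefficients (finite support is imposed where needed).\<close>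
type_synonym felt = "gen list \<Rightarrow> complex"

definition fmul :: "felt \<Rightarrow> felt \<Rightarrow> felt" (infixl "\<odot>" 70) where
  "p \<odot> q = (\<lambda>w. \<Sum>k\<le>length w. p (take k w) * q (drop k w))"

definition fsc :: "complex \<Rightarrow> felt \<Rightarrow> felt" where
  "fsc c p = (\<lambda>w. c * p w)"

definition fone :: felt where
  "fone = (\<lambda>w. if w = [] then 1 else 0)"

definition fgen :: "gen \<Rightarrow> felt" where
  "fgen g = (\<lambda>w. if w = [g] then 1 else 0)"

definition boxes :: "bsym list \<Rightarrow> nat \<Rightarrow> box set" where
  "boxes bb l = {1..length bb} \<times> {1..l}"

definition gens :: "bsym list \<Rightarrow> nat \<Rightarrow> gen set" where
  "gens bb l = boxes bb l \<times> boxes bb l"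

definition bpar :: "bsym list \<Rightarrow> box \<Rightarrow> nat" where
  "bpar bb a = par bb (fst a)"

definition glrel :: "bsym list \<Rightarrow> gen \<Rightarrow> gen \<Rightarrow> felt" where
  "glrel bb x y = (case x of (a, b) \<Rightarrow> case y of (c, d) \<Rightarrow>
     (let s = (-1::complex) ^ ((bpar bb a + bpar bb b) * (bpar bb c + bpar bb d)) in
       fgen x \<odot> fgen y - fsc s (fgen y \<odot> fgen x)
       - (fsc (of_bool (b = c)) (fgen (a, d)) - fsc (s * of_bool (d = a)) (fgen (c, b)))))"

definition falg :: "bsym list \<Rightarrow> nat \<Rightarrow> felt set" where
  "falg bb l = {p. finite {w. p w \<noteq> 0} \<and> (\<forall>w. p w \<noteq> 0 \<longrightarrow> set w \<subseteq> gens bb l)}"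

inductive_set Uideal :: "bsym list \<Rightarrow> nat \<Rightarrow> felt set" for bb l where
  rel: "x \<in> gens bb l \<Longrightarrow> y \<in> gens bb l \<Longrightarrow> glrel bb x y \<in> Uideal bb l"
| zero: "0 \<in> Uideal bb l"
| add: "p \<in> Uideal bb l \<Longrightarrow> q \<in> Uideal bb l \<Longrightarrow> p + q \<in> Uideal bb l"
| smult: "p \<in> Uideal bb l \<Longrightarrow> fsc c p \<in> Uideal bb l"
| lmult: "p \<in> Uideal bb l \<Longrightarrow> q \<in> falg bb l \<Longrightarrow> q \<odot> p \<in> Uideal bb l"
| rmult: "p \<in> Uideal bb l \<Longrightarrow> q \<in> falg bb l \<Longrightarrow> p \<odot> q \<in> Uideal bb l"

definition Ueq :: "bsym list \<Rightarrow> nat \<Rightarrow> felt \<Rightarrow> felt \<Rightarrow> bool" where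
  "Ueq bb l u v \<longleftrightarrow> u - v \<in> Uideal bb l"

text \<open>Supercommutator of homogeneous elements, sign s = (-1)^{|X||Y|} supplied.\<close>
definition scomm :: "complex \<Rightarrow> felt \<Rightarrow> felt \<Rightarrow> felt" where
  "scomm s X Y = X \<odot> Y - fsc s (Y \<odot> X)"

text \<open>t_{ij}(x) for x in Mat_l (JNF matrix, 0-based indices: entry (a,c) is x $$ (a-1,c-1)).\<close>
definition t1 :: "bsym list \<Rightarrow> nat \<Rightarrow> nat \<Rightarrow> nat \<Rightarrow> complex mat \<Rightarrow> felt" where
  "t1 bb l i j x = fsc ((-1) ^ par bb i)
     (\<Sum>a\<in>{1..l}. \<Sum>c\<in>{1..l}. fsc (x $$ (a - 1, c - 1)) (fgen ((i, a), (j, c))))"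

text \<open>t_{ij} on pure tensors x_1 (x) ... (x) x_r, given as lists; [] is the unit 1.\<close>
fun tt :: "bsym list \<Rightarrow> nat \<Rightarrow> nat \<Rightarrow> nat \<Rightarrow> complex mat list \<Rightarrow> felt" where
  "tt bb l i j [] = fsc (of_bool (i = j)) fone"
| "tt bb l i j [x] = t1 bb l i j x"
| "tt bb l i j (x # y # ys) = (\<Sum>k\<in>{1..length bb}. t1 bb l i k x \<odot> tt bb l k j (y # ys))"

end

theory Submission
  imports Defs
begin

lemma sum_fapply: "(sum f A :: felt) w = (\<Sum>a\<in>A. f a w)"
  by (induction A rule: infinite_finite_induct) auto

lemma fmul_assoc: "(p \<odot> q) \<odot> r = p \<odot> (q \<odot> r)"
proof (rule ext)
  fix w :: "gen list"
  define n where "n = length w"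
  define g where "g i j = p (take i w) * q (take j (drop i w)) * r (drop j (drop i w))" for i j
  have "((p \<odot> q) \<odot> r) w = (\<Sum>k\<le>n. \<Sum>i\<le>k. g i (k - i))"
    unfolding fmul_def n_def g_def
    by (auto simp: sum_distrib_right min_def drop_take intro!: sum.cong)
  also have "\<dots> = (\<Sum>(i,j)\<in>{(i,j). i+j \<le> n}. g i j)"
    by (rule sum.triangle_reindex_eq[symmetric])
  also have "{(i,j). i+j \<le> n} = Sigma {..n} (\<lambda>i. {..n-i})" by auto
  also have "(\<Sum>(i,j)\<in>Sigma {..n} (\<lambda>i. {..n-i}). g i j) = (\<Sum>i\<le>n. \<Sum>j\<le>n-i. g i j)"
    by (rule sum.Sigma[symmetric]) auto
  also have "\<dots> = (p \<odot> (q \<odot> r)) w"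
    unfolding fmul_def n_def g_def
    by (auto simp: sum_distrib_left mult.assoc add.commute intro!: sum.cong)
  finally show "((p \<odot> q) \<odot> r) w = (p \<odot> (q \<odot> r)) w" .
qed

lemma fmul_add_left: "(p + q) \<odot> r = p \<odot> r + q \<odot> r"
  by (auto simp: fmul_def fun_eq_iff distrib_right sum.distrib)
lemma fmul_add_right: "r \<odot> (p + q) = r \<odot> p + r \<odot> q"
  by (auto simp: fmul_def fun_eq_iff distrib_left sum.distrib)
lemma fmul_diff_left: "(p - q) \<odot> r = p \<odot> r - q \<odot> r"
  by (auto simp: fmul_def fun_eq_iff left_diff_distrib sum_subtractf)
lemma fmul_diff_right: "r \<odot> (p - q) = r \<odot> p - r \<odot> q"
  by (auto simp: fmul_def fun_eq_iff right_diff_distrib sum_subtractf)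
lemma fmul_zero_left[simp]: "0 \<odot> r = 0"
  by (auto simp: fmul_def fun_eq_iff)
lemma fmul_zero_right[simp]: "r \<odot> 0 = 0"
  by (auto simp: fmul_def fun_eq_iff)
lemma fmul_sum_left: "(sum f A) \<odot> r = (\<Sum>a\<in>A. f a \<odot> r)"
  by (simp add: fun_eq_iff sum_fapply fmul_def sum_distrib_right sum.swap[of _ A])
lemma fmul_sum_right: "r \<odot> (sum f A) = (\<Sum>a\<in>A. r \<odot> f a)"
  by (simp add: fun_eq_iff sum_fapply fmul_def sum_distrib_left sum.swap[of _ A])
lemma fmul_fsc_left: "fsc c p \<odot> r = fsc c (p \<odot> r)"
  by (auto simp: fmul_def fsc_def fun_eq_iff sum_distrib_left mult.assoc)
lemma fmul_fsc_right: "r \<odot> fsc c p = fsc c (r \<odot> p)"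
  by (auto simp: fmul_def fsc_def fun_eq_iff sum_distrib_left mult.assoc mult.left_commute)
lemma fone_left[simp]: "fone \<odot> p = p"
proof -
  have "\<And>w. (\<Sum>k\<le>length w. (if take k w = [] then 1 else 0) * p (drop k w)) = p w"
    by (subst sum.atLeast_Suc_atMost[of 0, simplified atLeast0AtMost]) (auto intro!: sum.neutral)
  then show ?thesis by (auto simp: fmul_def fone_def fun_eq_iff)
qed
lemma fone_right[simp]: "p \<odot> fone = p"
proof -
  have "\<And>w. (\<Sum>k\<le>length w. p (take k w) * (if drop k w = [] then 1 else 0)) = p w"
  proof -
    fix w :: "gen list"
    have "(\<Sum>k\<le>length w. p (take k w) * (if drop k w = [] then 1 else 0))
       = (\<Sum>k\<le>length w. if k = length w then p w else 0)"
      by (rule sum.cong) auto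
    then show "?thesis w" by simp
  qed
  then show ?thesis by (auto simp: fmul_def fone_def fun_eq_iff)
qed
lemma fsc_fsc[simp]: "fsc c (fsc d p) = fsc (c * d) p" by (simp add: fsc_def mult.assoc)
lemma fsc_one[simp]: "fsc 1 p = p" by (simp add: fsc_def)
lemma fsc_zero[simp]: "fsc 0 p = 0" by (simp add: fsc_def fun_eq_iff)
lemma fsc_zero2[simp]: "fsc c 0 = 0" by (simp add: fsc_def fun_eq_iff)
lemma fsc_add: "fsc c (p + q) = fsc c p + fsc c q" by (simp add: fsc_def fun_eq_iff distrib_left)
lemma fsc_diff: "fsc c (p - q) = fsc c p - fsc c q" by (simp add: fsc_def fun_eq_iff right_diff_distrib)
lemma fsc_add_left: "fsc (c + d) p = fsc c p + fsc d p" by (simp add: fsc_def fun_eq_iff distrib_right)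
lemma fsc_minus: "fsc (-1) p = - p" by (simp add: fsc_def fun_eq_iff)
lemma fsc_sum: "fsc c (sum f A) = (\<Sum>a\<in>A. fsc c (f a))"
  by (simp add: fun_eq_iff sum_fapply fsc_def sum_distrib_left)
lemma fsc_sum_left: "fsc (sum f A) p = (\<Sum>a\<in>A. fsc (f a) p)"
  by (simp add: fun_eq_iff sum_fapply fsc_def sum_distrib_right)

lemma Uideal_minus: "p \<in> Uideal bb l \<Longrightarrow> - p \<in> Uideal bb l"
proof -
  assume "p \<in> Uideal bb l"
  then have "fsc (-1) p \<in> Uideal bb l" by (rule Uideal.smult)
  then show ?thesis by (simp only: fsc_minus)
qed
lemma Uideal_diff: "p \<in> Uideal bb l \<Longrightarrow> q \<in> Uideal bb l \<Longrightarrow> p - q \<in> Uideal bb l"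
proof -
  assume a: "p \<in> Uideal bb l" "q \<in> Uideal bb l"
  have "p + - q \<in> Uideal bb l" by (rule Uideal.add[OF a(1) Uideal_minus[OF a(2)]])
  then show ?thesis by (simp only: diff_conv_add_uminus)
qed
lemma Uideal_sum: "(\<And>a. a \<in> A \<Longrightarrow> f a \<in> Uideal bb l) \<Longrightarrow> sum f A \<in> Uideal bb l"
proof (induction A rule: infinite_finite_induct)
  case (infinite A)
  from infinite(1) have "sum f A = 0" by (rule sum.infinite)
  then show ?case by (simp only: Uideal.zero)
next
  case empty
  show ?case by (simp only: sum.empty Uideal.zero)
next
  case (insert x F)
  have e: "sum f (insert x F) = f x + sum f F" by (rule sum.insert[OF insert(1,2)])
  have "f x \<in> Uideal bb l" by (rule insert(4)) simp
  moreover have "sum f F \<in> Uideal bb l" by (rule insert(3), rule insert(4)) simp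
  ultimately show ?case unfolding e by (rule Uideal.add)
qed

lemma Ueq_refl: "Ueq bb l p p" by (simp add: Ueq_def Uideal.zero)
lemma Ueq_eqI: "p = q \<Longrightarrow> Ueq bb l p q" by (simp add: Ueq_refl)
lemma Ueq_trans: "Ueq bb l p q \<Longrightarrow> Ueq bb l q r \<Longrightarrow> Ueq bb l p r"
  unfolding Ueq_def using Uideal.add[of "p - q" bb l "q - r"] by simp
lemma Ueq_add: "Ueq bb l p q \<Longrightarrow> Ueq bb l p' q' \<Longrightarrow> Ueq bb l (p + p') (q + q')"
  unfolding Ueq_def using Uideal.add[of "p - q" bb l "p' - q'"] by (simp add: algebra_simps)
lemma Ueq_diff: "Ueq bb l p q \<Longrightarrow> Ueq bb l p' q' \<Longrightarrow> Ueq bb l (p - p') (q - q')"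
  unfolding Ueq_def using Uideal_diff[of "p - q" bb l "p' - q'"] by (simp add: algebra_simps)
lemma Ueq_fsc: "Ueq bb l p q \<Longrightarrow> Ueq bb l (fsc c p) (fsc c q)"
  unfolding Ueq_def using Uideal.smult[of "p - q" bb l c] by (simp add: fsc_diff)
lemma Ueq_sum: "(\<And>a. a \<in> A \<Longrightarrow> Ueq bb l (f a) (g a)) \<Longrightarrow> Ueq bb l (sum f A) (sum g A)"
  unfolding Ueq_def using Uideal_sum[of A "\<lambda>a. f a - g a" bb l] by (simp add: sum_subtractf)
lemma Ueq_lmult: "Ueq bb l p q \<Longrightarrow> r \<in> falg bb l \<Longrightarrow> Ueq bb l (r \<odot> p) (r \<odot> q)"
  unfolding Ueq_def using Uideal.lmult[of "p - q" bb l r] by (simp add: fmul_diff_right)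
lemma Ueq_rmult: "Ueq bb l p q \<Longrightarrow> r \<in> falg bb l \<Longrightarrow> Ueq bb l (p \<odot> r) (q \<odot> r)"
  unfolding Ueq_def using Uideal.rmult[of "p - q" bb l r] by (simp add: fmul_diff_left)

lemma falgI: "finite {w. p w \<noteq> 0} \<Longrightarrow> (\<And>w. p w \<noteq> 0 \<Longrightarrow> set w \<subseteq> gens bb l) \<Longrightarrow> p \<in> falg bb l"
  unfolding falg_def by blast
lemma falgD: "p \<in> falg bb l \<Longrightarrow> finite {w. p w \<noteq> 0}"
  "p \<in> falg bb l \<Longrightarrow> p w \<noteq> 0 \<Longrightarrow> set w \<subseteq> gens bb l"
  unfolding falg_def by blast+
lemma falg_zero: "0 \<in> falg bb l" by (rule falgI) auto
lemma falg_add: "p \<in> falg bb l \<Longrightarrow> q \<in> falg bb l \<Longrightarrow> p + q \<in> falg bb l"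
proof (rule falgI)
  assume a: "p \<in> falg bb l" "q \<in> falg bb l"
  have "{w. (p + q) w \<noteq> 0} \<subseteq> {w. p w \<noteq> 0} \<union> {w. q w \<noteq> 0}" by auto
  then show "finite {w. (p + q) w \<noteq> 0}"
    by (rule finite_subset) (rule finite_UnI[OF falgD(1)[OF a(1)] falgD(1)[OF a(2)]])
  fix w assume "(p + q) w \<noteq> 0"
  then have "p w \<noteq> 0 \<or> q w \<noteq> 0" by auto
  then show "set w \<subseteq> gens bb l" using falgD(2)[OF a(1)] falgD(2)[OF a(2)] by blast
qed
lemma falg_fsc: "p \<in> falg bb l \<Longrightarrow> fsc c p \<in> falg bb l"
proof (rule falgI)
  assume a: "p \<in> falg bb l"
  have "{w. fsc c p w \<noteq> 0} \<subseteq> {w. p w \<noteq> 0}" by (auto simp: fsc_def)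
  then show "finite {w. fsc c p w \<noteq> 0}" by (rule finite_subset) (rule falgD(1)[OF a])
  fix w assume "fsc c p w \<noteq> 0"
  then have "p w \<noteq> 0" by (auto simp: fsc_def)
  then show "set w \<subseteq> gens bb l" using falgD(2)[OF a] by blast
qed
lemma falg_sum: "(\<And>a. a \<in> A \<Longrightarrow> f a \<in> falg bb l) \<Longrightarrow> sum f A \<in> falg bb l"
  by (induction A rule: infinite_finite_induct) (simp_all add: falg_add falg_zero)
lemma falg_fone: "fone \<in> falg bb l"
proof (rule falgI)
  have "{w. fone w \<noteq> 0} \<subseteq> {[]}" by (auto simp: fone_def)
  then show "finite {w. fone w \<noteq> 0}" by (rule finite_subset) simp
  fix w assume "fone w \<noteq> 0"
  then show "set w \<subseteq> gens bb l" by (auto simp: fone_def split: if_splits)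
qed
lemma falg_fgen: "g \<in> gens bb l \<Longrightarrow> fgen g \<in> falg bb l"
proof (rule falgI)
  assume a: "g \<in> gens bb l"
  have "{w. fgen g w \<noteq> 0} \<subseteq> {[g]}" by (auto simp: fgen_def)
  then show "finite {w. fgen g w \<noteq> 0}" by (rule finite_subset) simp
  fix w assume "fgen g w \<noteq> 0"
  then have "w = [g]" by (auto simp: fgen_def split: if_splits)
  then show "set w \<subseteq> gens bb l" using a by simp
qed
lemma falg_fmul: "p \<in> falg bb l \<Longrightarrow> q \<in> falg bb l \<Longrightarrow> p \<odot> q \<in> falg bb l"
proof -
  assume a: "p \<in> falg bb l" "q \<in> falg bb l"
  define S where "S = (\<lambda>(u,v). u @ v) ` ({w. p w \<noteq> 0} \<times> {w. q w \<noteq> 0})"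
  have sub: "w \<in> S" if w: "(p \<odot> q) w \<noteq> 0" for w
  proof -
    have "(\<Sum>k\<le>length w. p (take k w) * q (drop k w)) \<noteq> 0" using w unfolding fmul_def .
    then obtain k where "k \<in> {..length w}" "p (take k w) * q (drop k w) \<noteq> 0"
      by (rule sum.not_neutral_contains_not_neutral)
    then have "p (take k w) \<noteq> 0" "q (drop k w) \<noteq> 0" by simp_all
    then have x: "(take k w, drop k w) \<in> {w. p w \<noteq> 0} \<times> {w. q w \<noteq> 0}" by simp
    have e: "w = (\<lambda>(u,v). u @ v) (take k w, drop k w)" by simp
    show ?thesis unfolding S_def by (rule image_eqI[of w "\<lambda>(u,v). u @ v" "(take k w, drop k w)", OF e x])
  qed
  have fS: "finite S" unfolding S_def
    by (rule finite_imageI, rule finite_cartesian_product, rule falgD(1)[OF a(1)], rule falgD(1)[OF a(2)])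
  have fin: "finite {w. (p \<odot> q) w \<noteq> 0}"
    by (rule finite_subset[OF _ fS], rule subsetI, rule sub, simp)
  have st: "set w \<subseteq> gens bb l" if "(p \<odot> q) w \<noteq> 0" for w
  proof -
    have "w \<in> S" by (rule sub[OF that])
    then obtain u v where "w = u @ v" "p u \<noteq> 0" "q v \<noteq> 0" unfolding S_def by auto
    moreover have "set u \<subseteq> gens bb l" by (rule falgD(2)[OF a(1)], fact)
    moreover have "set v \<subseteq> gens bb l" by (rule falgD(2)[OF a(2)], fact)
    ultimately show ?thesis by (simp only: set_append Un_subset_iff)
  qed
  show ?thesis using fin st by (rule falgI)
qed

lemma par_01: "par bb i = 0 \<or> par bb i = 1" by (simp add: par_def)

lemma fsc_of_bool: "fsc (of_bool b) p = (if b then p else 0)" by simp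

lemma t1_falg: "i \<in> {1..length bb} \<Longrightarrow> j \<in> {1..length bb} \<Longrightarrow> t1 bb l i j x \<in> falg bb l"
  unfolding t1_def
  by (intro falg_fsc falg_sum falg_fgen) (auto simp: gens_def boxes_def)

lemma tt_falg: "i \<in> {1..length bb} \<Longrightarrow> j \<in> {1..length bb} \<Longrightarrow> tt bb l i j zs \<in> falg bb l"
proof (induction bb l i j zs rule: tt.induct)
  case (1 bb l i j) then show ?case by (simp add: falg_fsc falg_fone)
next
  case (2 bb l i j x) then show ?case by (simp add: t1_falg)
next
  case (3 bb l i j x y ys)
  have "t1 bb l i p x \<odot> tt bb l p j (y # ys) \<in> falg bb l" if p: "p \<in> {1..length bb}" for p
  proof (rule falg_fmul)
    show "t1 bb l i p x \<in> falg bb l" using 3(2) p by (rule t1_falg)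
    show "tt bb l p j (y # ys) \<in> falg bb l" using 3(1)[of p] p 3(3) by simp
  qed
  then show ?case unfolding tt.simps by (rule falg_sum)
qed

lemma tt_cons: "j \<in> {1..length bb} \<Longrightarrow>
  tt bb l h j (y # zs) = (\<Sum>p\<in>{1..length bb}. t1 bb l h p y \<odot> tt bb l p j zs)"
proof (cases zs)
  case Nil
  assume j: "j \<in> {1..length bb}"
  have "(\<Sum>p\<in>{1..length bb}. t1 bb l h p y \<odot> tt bb l p j zs)
      = (\<Sum>p\<in>{1..length bb}. if p = j then t1 bb l h j y else 0)"
    by (rule sum.cong) (auto simp: Nil fmul_fsc_right)
  also have "\<dots> = t1 bb l h j y" using j by simp
  finally show ?thesis using Nil by simp
next
  case (Cons z zs') then show ?thesis by simp
qed

lemma scomm_sum_right: "scomm s X (sum f A) = (\<Sum>a\<in>A. scomm s X (f a))"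
  by (simp add: scomm_def fmul_sum_left fmul_sum_right fsc_sum sum_subtractf)

lemma scomm_leibniz: "scomm (s1 * s2) X (B \<odot> C) = scomm s1 X B \<odot> C + fsc s1 (B \<odot> scomm s2 X C)"
  by (simp add: scomm_def fmul_diff_left fmul_diff_right fmul_fsc_left fmul_fsc_right fsc_diff fmul_assoc mult.commute)

lemma glrel_step:
  assumes "((i,a),(j,c)) \<in> gens bb l" "((h,b),(k,d)) \<in> gens bb l"
  shows "Ueq bb l (scomm ((-1)^((par bb i + par bb j)*(par bb h + par bb k))) (fgen ((i,a),(j,c))) (fgen ((h,b),(k,d))))
    (fsc (of_bool (j = h \<and> c = b)) (fgen ((i,a),(k,d)))
     - fsc ((-1)^((par bb i + par bb j)*(par bb h + par bb k)) * of_bool (k = i \<and> d = a)) (fgen ((h,b),(j,c))))"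
proof -
  have "scomm ((-1)^((par bb i + par bb j)*(par bb h + par bb k))) (fgen ((i,a),(j,c))) (fgen ((h,b),(k,d)))
    - (fsc (of_bool (j = h \<and> c = b)) (fgen ((i,a),(k,d)))
     - fsc ((-1)^((par bb i + par bb j)*(par bb h + par bb k)) * of_bool (k = i \<and> d = a)) (fgen ((h,b),(j,c))))
    = glrel bb ((i,a),(j,c)) ((h,b),(k,d))"
    by (simp add: glrel_def bpar_def Let_def scomm_def)
  then show ?thesis using Uideal.rel[OF assms] by (simp add: Ueq_def)
qed

lemma scomm_sum_left: "scomm s (sum f A) Y = (\<Sum>a\<in>A. scomm s (f a) Y)"
  by (simp add: scomm_def fmul_sum_left fmul_sum_right fsc_sum sum_subtractf)
lemma scomm_fsc_left: "scomm s (fsc c X) Y = fsc c (scomm s X Y)"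
  by (simp add: scomm_def fmul_fsc_left fmul_fsc_right fsc_diff mult.commute)
lemma scomm_fsc_right: "scomm s X (fsc c Y) = fsc c (scomm s X Y)"
  by (simp add: scomm_def fmul_fsc_left fmul_fsc_right fsc_diff mult.commute)

lemma t1_expand: "t1 bb l i j x = (\<Sum>a\<in>{1..l}. \<Sum>c\<in>{1..l}. fsc ((-1)^par bb i * x $$ (a - 1, c - 1)) (fgen ((i, a), (j, c))))"
  by (simp add: t1_def fsc_sum)

lemma mat_entry:
  assumes "x \<in> carrier_mat l l" "y \<in> carrier_mat l l" "a \<in> {1..l}" "d \<in> {1..l}"
  shows "(x * y) $$ (a - 1, d - 1) = (\<Sum>c\<in>{1..l}. x $$ (a - 1, c - 1) * y $$ (c - 1, d - 1))"
proof -
  have dx: "dim_row x = l" "dim_col x = l" and dy: "dim_row y = l" "dim_col y = l"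
    using assms(1,2) by auto
  have "1 \<le> a" "a \<le> l" "1 \<le> d" "d \<le> l" using assms(3,4) by simp_all
  then have ad: "a - 1 < l" "d - 1 < l" by linarith+
  then have ad': "a - Suc 0 < l" "d - Suc 0 < l" by simp_all
  have "(x * y) $$ (a - 1, d - 1) = row x (a - 1) \<bullet> col y (d - 1)"
    by (rule index_mult_mat(1); simp only: dx dy ad)
  also have "\<dots> = (\<Sum>c\<in>{0..<l}. row x (a - 1) $ c * col y (d - 1) $ c)"
    by (simp only: scalar_prod_def dim_col dy)
  also have "\<dots> = (\<Sum>c<l. x $$ (a - 1, c) * y $$ (c, d - 1))"
    unfolding atLeast0LessThan
    by (rule sum.cong[OF refl]) (simp add: dx dy ad')
  also have "\<dots> = (\<Sum>c\<in>{1..l}. x $$ (a - 1, c - 1) * y $$ (c - 1, d - 1))"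
    by (rule sum.reindex_bij_witness[of _ "\<lambda>c. c - 1" Suc]) (auto simp: Suc_le_eq)
  finally show ?thesis .
qed

lemma sum_delta_fsc:
  assumes "finite L"
  shows "(\<Sum>d\<in>L. fsc (K d * of_bool (d = a)) (X d)) = (if a \<in> L then fsc (K a) (X a) else 0)"
proof -
  have "(\<Sum>d\<in>L. fsc (K d * of_bool (d = a)) (X d)) = (\<Sum>d\<in>L. if d = a then fsc (K d) (X d) else 0)"
    by (rule sum.cong) auto
  also have "\<dots> = (if a \<in> L then fsc (K a) (X a) else 0)" using assms by (simp add: sum.delta')
  finally show ?thesis .
qed

lemma collapse1:
  fixes E :: "nat \<Rightarrow> nat \<Rightarrow> felt"
  assumes L: "finite L"
  shows "(\<Sum>a\<in>L. \<Sum>c\<in>L. \<Sum>b\<in>L. \<Sum>d\<in>L. fsc (f a c * g b d * of_bool (b = c)) (E a d))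
    = (\<Sum>a\<in>L. \<Sum>d\<in>L. fsc (\<Sum>c\<in>L. f a c * g c d) (E a d))"
proof -
  have "(\<Sum>a\<in>L. \<Sum>c\<in>L. \<Sum>b\<in>L. \<Sum>d\<in>L. fsc (f a c * g b d * of_bool (b = c)) (E a d))
      = (\<Sum>a\<in>L. \<Sum>c\<in>L. \<Sum>d\<in>L. \<Sum>b\<in>L. fsc (f a c * g b d * of_bool (b = c)) (E a d))"
    by (rule sum.cong[OF refl], rule sum.cong[OF refl], rule sum.swap)
  also have "\<dots> = (\<Sum>a\<in>L. \<Sum>c\<in>L. \<Sum>d\<in>L. if c \<in> L then fsc (f a c * g c d) (E a d) else 0)"
    by (intro sum.cong refl) (rule sum_delta_fsc[OF L])
  also have "\<dots> = (\<Sum>a\<in>L. \<Sum>c\<in>L. \<Sum>d\<in>L. fsc (f a c * g c d) (E a d))"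
    by (intro sum.cong refl) simp
  also have "\<dots> = (\<Sum>a\<in>L. \<Sum>d\<in>L. \<Sum>c\<in>L. fsc (f a c * g c d) (E a d))"
    by (rule sum.cong[OF refl], rule sum.swap)
  also have "\<dots> = (\<Sum>a\<in>L. \<Sum>d\<in>L. fsc (\<Sum>c\<in>L. f a c * g c d) (E a d))"
    by (simp add: fsc_sum_left)
  finally show ?thesis .
qed

lemma collapse2:
  fixes F :: "nat \<Rightarrow> nat \<Rightarrow> felt"
  assumes L: "finite L"
  shows "(\<Sum>a\<in>L. \<Sum>c\<in>L. \<Sum>b\<in>L. \<Sum>d\<in>L. fsc (f a c * g b d * of_bool (d = a)) (F b c))
    = (\<Sum>b\<in>L. \<Sum>c\<in>L. fsc (\<Sum>a\<in>L. g b a * f a c) (F b c))"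
proof -
  have "(\<Sum>a\<in>L. \<Sum>c\<in>L. \<Sum>b\<in>L. \<Sum>d\<in>L. fsc (f a c * g b d * of_bool (d = a)) (F b c))
      = (\<Sum>a\<in>L. \<Sum>c\<in>L. \<Sum>b\<in>L. if a \<in> L then fsc (f a c * g b a) (F b c) else 0)"
    by (intro sum.cong refl) (rule sum_delta_fsc[OF L])
  also have "\<dots> = (\<Sum>a\<in>L. \<Sum>c\<in>L. \<Sum>b\<in>L. fsc (f a c * g b a) (F b c))"
    by (intro sum.cong refl) simp
  also have "\<dots> = (\<Sum>c\<in>L. \<Sum>a\<in>L. \<Sum>b\<in>L. fsc (f a c * g b a) (F b c))"
    by (rule sum.swap)
  also have "\<dots> = (\<Sum>c\<in>L. \<Sum>b\<in>L. \<Sum>a\<in>L. fsc (f a c * g b a) (F b c))"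
    by (rule sum.cong[OF refl], rule sum.swap)
  also have "\<dots> = (\<Sum>b\<in>L. \<Sum>c\<in>L. \<Sum>a\<in>L. fsc (f a c * g b a) (F b c))"
    by (rule sum.swap)
  also have "\<dots> = (\<Sum>b\<in>L. \<Sum>c\<in>L. fsc (\<Sum>a\<in>L. g b a * f a c) (F b c))"
    by (simp add: fsc_sum_left mult.commute)
  finally show ?thesis .
qed

lemma sign1: "(-1::complex)^(par bb i * par bb j + par bb i * par bb j + par bb j * par bb j) = (-1)^par bb j"
  using par_01[of bb i] par_01[of bb j] by auto

lemma sign2: "(-1::complex)^((par bb i + par bb j) * (par bb h + par bb i)) * (-1)^par bb i
   = (-1)^(par bb i * par bb j + par bb i * par bb h + par bb j * par bb h)"
  using par_01[of bb i] par_01[of bb j] par_01[of bb h] by auto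

lemma baseA:
  assumes ij: "i \<in> {1..length bb}" "j \<in> {1..length bb}" "h \<in> {1..length bb}" "k \<in> {1..length bb}"
    and xy: "x \<in> carrier_mat l l" "y \<in> carrier_mat l l"
  shows "Ueq bb l (scomm ((-1)^((par bb i + par bb j)*(par bb h + par bb k))) (t1 bb l i j x) (t1 bb l h k y))
     (fsc ((-1)^(par bb i * par bb j + par bb i * par bb h + par bb j * par bb h))
        (fsc (of_bool (h = j)) fone \<odot> t1 bb l i k (x * y) - t1 bb l h j (y * x) \<odot> fsc (of_bool (i = k)) fone))"
proof -
  define S :: complex where "S = (-1)^((par bb i + par bb j)*(par bb h + par bb k))"
  define \<sigma> :: complex where "\<sigma> = (-1)^(par bb i * par bb j + par bb i * par bb h + par bb j * par bb h)"
  define L where "L = {1..l}"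
  have fL: "finite L" by (simp add: L_def)
  define \<alpha> where "\<alpha> a c = (-1)^par bb i * x $$ (a - 1, c - 1)" for a c
  define \<beta> where "\<beta> b d = (-1)^par bb h * y $$ (b - 1, d - 1)" for b d
  define E1 where "E1 a d = fgen ((i, a), (k, d))" for a d
  define E2 where "E2 b c = fgen ((h, b), (j, c))" for b c
  have st1: "scomm S (t1 bb l i j x) (t1 bb l h k y) = (\<Sum>a\<in>L. \<Sum>c\<in>L. \<Sum>b\<in>L. \<Sum>d\<in>L.
      fsc (\<alpha> a c * \<beta> b d) (scomm S (fgen ((i,a),(j,c))) (fgen ((h,b),(k,d)))))"
    unfolding t1_expand \<alpha>_def \<beta>_def L_def
    apply (simp only: scomm_sum_left scomm_fsc_left)
    apply (simp only: scomm_sum_right scomm_fsc_right fsc_sum fsc_fsc)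
    done
  define M where "M = (\<Sum>a\<in>L. \<Sum>c\<in>L. \<Sum>b\<in>L. \<Sum>d\<in>L.
      fsc (\<alpha> a c * \<beta> b d) (fsc (of_bool (j = h \<and> c = b)) (E1 a d) - fsc (S * of_bool (k = i \<and> d = a)) (E2 b c)))"
  have st2: "Ueq bb l (scomm S (t1 bb l i j x) (t1 bb l h k y)) M"
    unfolding st1 M_def
  proof (intro Ueq_sum Ueq_fsc)
    fix a c b d assume "a \<in> L" "c \<in> L" "b \<in> L" "d \<in> L"
    then have "((i,a),(j,c)) \<in> gens bb l" "((h,b),(k,d)) \<in> gens bb l"
      using ij by (auto simp: gens_def boxes_def L_def)
    from glrel_step[OF this]
    show "Ueq bb l (scomm S (fgen ((i, a), j, c)) (fgen ((h, b), k, d)))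
           (fsc (of_bool (j = h \<and> c = b)) (E1 a d) - fsc (S * of_bool (k = i \<and> d = a)) (E2 b c))"
      unfolding S_def E1_def E2_def .
  qed
  define M1 where "M1 = (\<Sum>a\<in>L. \<Sum>c\<in>L. \<Sum>b\<in>L. \<Sum>d\<in>L. fsc (\<alpha> a c * \<beta> b d * of_bool (j = h \<and> c = b)) (E1 a d))"
  define M2 where "M2 = (\<Sum>a\<in>L. \<Sum>c\<in>L. \<Sum>b\<in>L. \<Sum>d\<in>L. fsc (\<alpha> a c * \<beta> b d * (S * of_bool (k = i \<and> d = a))) (E2 b c))"
  have st3: "M = M1 - M2"
    unfolding M_def M1_def M2_def by (simp only: fsc_diff fsc_fsc sum_subtractf)
  have xyE: "(x * y) $$ (a - 1, d - 1) = (\<Sum>c\<in>L. x $$ (a - 1, c - 1) * y $$ (c - 1, d - 1))"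
    if "a \<in> L" "d \<in> L" for a d using mat_entry[OF xy] that by (simp add: L_def)
  have yxE: "(y * x) $$ (b - 1, c - 1) = (\<Sum>a\<in>L. y $$ (b - 1, a - 1) * x $$ (a - 1, c - 1))"
    if "b \<in> L" "c \<in> L" for b c using mat_entry[OF xy(2,1)] that by (simp add: L_def)
  have st4: "M1 = fsc \<sigma> (fsc (of_bool (h = j)) fone \<odot> t1 bb l i k (x * y))"
  proof (cases "h = j")
    case False
    then show ?thesis unfolding M1_def by simp
  next
    case True
    have "M1 = (\<Sum>a\<in>L. \<Sum>c\<in>L. \<Sum>b\<in>L. \<Sum>d\<in>L. fsc (\<alpha> a c * \<beta> b d * of_bool (b = c)) (E1 a d))"
      unfolding M1_def using True by (simp add: eq_commute[of c b for c b :: nat])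
    also have "\<dots> = (\<Sum>a\<in>L. \<Sum>d\<in>L. fsc (\<Sum>c\<in>L. \<alpha> a c * \<beta> c d) (E1 a d))"
      by (rule collapse1[OF fL])
    also have "\<dots> = (\<Sum>a\<in>L. \<Sum>d\<in>L. fsc (\<sigma> * ((-1)^par bb i * (x * y) $$ (a - 1, d - 1))) (E1 a d))"
    proof (rule sum.cong[OF refl], rule sum.cong[OF refl])
      fix a d assume "a \<in> L" "d \<in> L"
      have "\<sigma> = (-1)^par bb h" unfolding \<sigma>_def using True sign1[of bb i j] by simp
      then show "fsc (\<Sum>c\<in>L. \<alpha> a c * \<beta> c d) (E1 a d) = fsc (\<sigma> * ((-1)^par bb i * (x * y) $$ (a - 1, d - 1))) (E1 a d)"
        unfolding xyE[OF \<open>a \<in> L\<close> \<open>d \<in> L\<close>] \<alpha>_def \<beta>_def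
        by (simp add: sum_distrib_left mult_ac)
    qed
    also have "\<dots> = fsc \<sigma> (fsc (of_bool (h = j)) fone \<odot> t1 bb l i k (x * y))"
      using True unfolding t1_expand E1_def L_def by (simp add: fsc_sum)
    finally show ?thesis .
  qed
  have st5: "M2 = fsc \<sigma> (t1 bb l h j (y * x) \<odot> fsc (of_bool (i = k)) fone)"
  proof (cases "i = k")
    case False
    then show ?thesis unfolding M2_def by (simp add: fmul_fsc_right)
  next
    case True
    have "M2 = (\<Sum>a\<in>L. \<Sum>c\<in>L. \<Sum>b\<in>L. \<Sum>d\<in>L. fsc (\<alpha> a c * (\<beta> b d * S) * of_bool (d = a)) (E2 b c))"
      unfolding M2_def using True by (simp add: mult_ac)
    also have "\<dots> = (\<Sum>b\<in>L. \<Sum>c\<in>L. fsc (\<Sum>a\<in>L. (\<beta> b a * S) * \<alpha> a c) (E2 b c))"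
      by (rule collapse2[OF fL])
    also have "\<dots> = (\<Sum>b\<in>L. \<Sum>c\<in>L. fsc (\<sigma> * ((-1)^par bb h * (y * x) $$ (b - 1, c - 1))) (E2 b c))"
    proof (rule sum.cong[OF refl], rule sum.cong[OF refl])
      fix b c assume "b \<in> L" "c \<in> L"
      have e: "\<sigma> = S * (-1)^par bb i" unfolding \<sigma>_def S_def using True sign2[of bb i j h] by simp
      show "fsc (\<Sum>a\<in>L. (\<beta> b a * S) * \<alpha> a c) (E2 b c) = fsc (\<sigma> * ((-1)^par bb h * (y * x) $$ (b - 1, c - 1))) (E2 b c)"
        unfolding yxE[OF \<open>b \<in> L\<close> \<open>c \<in> L\<close>] \<alpha>_def \<beta>_def e
        by (simp add: sum_distrib_left mult_ac)
    qed
    also have "\<dots> = fsc \<sigma> (t1 bb l h j (y * x) \<odot> fsc (of_bool (i = k)) fone)"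
      using True unfolding t1_expand E2_def L_def by (simp add: fsc_sum fmul_fsc_right)
    finally show ?thesis .
  qed
  have "Ueq bb l (scomm S (t1 bb l i j x) (t1 bb l h k y)) (M1 - M2)"
    using st2 st3 by simp
  then show ?thesis unfolding st4 st5 S_def \<sigma>_def by (simp add: fsc_diff)
qed

definition RR :: "bsym list \<Rightarrow> nat \<Rightarrow> nat \<Rightarrow> nat \<Rightarrow> complex mat \<Rightarrow> nat \<Rightarrow> nat \<Rightarrow> complex mat list \<Rightarrow> felt" where
  "RR bb l i k x h j zs = (\<Sum>s\<in>{1..length zs}.
          tt bb l h j (take (s - 1) zs) \<odot> tt bb l i k ((x * zs ! (s - 1)) # drop s zs)
        - tt bb l h j (take (s - 1) zs @ [zs ! (s - 1) * x]) \<odot> tt bb l i k (drop s zs))"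

lemma sign3: "(-1::complex)^((par bb i + par bb j) * (par bb h + par bb k))
  = (-1)^((par bb i + par bb j) * (par bb h + par bb p)) * (-1)^((par bb i + par bb j) * (par bb p + par bb k))"
  using par_01[of bb i] par_01[of bb j] par_01[of bb h] par_01[of bb k] par_01[of bb p] by auto

lemma sign4: "(-1::complex)^((par bb i + par bb j) * (par bb h + par bb p)) * (-1)^(par bb i * par bb j + par bb i * par bb p + par bb j * par bb p)
  = (-1)^(par bb i * par bb j + par bb i * par bb h + par bb j * par bb h)"
  using par_01[of bb i] par_01[of bb j] par_01[of bb h] par_01[of bb p] by auto

lemma RR_cons:
  assumes j: "j \<in> {1..length bb}"
  shows "RR bb l i k x h j (y # zs) = (tt bb l h j [] \<odot> tt bb l i k ((x * y) # zs) - tt bb l h j [y * x] \<odot> tt bb l i k zs)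
     + (\<Sum>p\<in>{1..length bb}. t1 bb l h p y \<odot> RR bb l i k x p j zs)"
proof -
  define f where "f s = tt bb l h j (take (s - 1) (y # zs)) \<odot> tt bb l i k ((x * (y # zs) ! (s - 1)) # drop s (y # zs))
        - tt bb l h j (take (s - 1) (y # zs) @ [(y # zs) ! (s - 1) * x]) \<odot> tt bb l i k (drop s (y # zs))" for s
  have "RR bb l i k x h j (y # zs) = sum f {1..Suc (length zs)}" unfolding RR_def f_def by simp
  also have "\<dots> = f 1 + sum f {Suc 1..Suc (length zs)}" by (rule sum.atLeast_Suc_atMost) simp
  also have "sum f {Suc 1..Suc (length zs)} = (\<Sum>s\<in>{1..length zs}. f (Suc s))"
    by (rule sum.shift_bounds_cl_Suc_ivl)
  also have "\<dots> = (\<Sum>s\<in>{1..length zs}. \<Sum>p\<in>{1..length bb}. t1 bb l h p y \<odot>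
        (tt bb l p j (take (s - 1) zs) \<odot> tt bb l i k ((x * zs ! (s - 1)) # drop s zs)
        - tt bb l p j (take (s - 1) zs @ [zs ! (s - 1) * x]) \<odot> tt bb l i k (drop s zs)))"
  proof (rule sum.cong[OF refl])
    fix s assume s: "s \<in> {1..length zs}"
    then obtain s' where s': "s = Suc s'" by (cases s) auto
    have "f (Suc s) = tt bb l h j (y # take (s - 1) zs) \<odot> tt bb l i k ((x * zs ! (s - 1)) # drop s zs)
        - tt bb l h j (y # (take (s - 1) zs @ [zs ! (s - 1) * x])) \<odot> tt bb l i k (drop s zs)"
      unfolding f_def s' by simp
    also have "\<dots> = (\<Sum>p\<in>{1..length bb}. t1 bb l h p y \<odot>
        (tt bb l p j (take (s - 1) zs) \<odot> tt bb l i k ((x * zs ! (s - 1)) # drop s zs)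
        - tt bb l p j (take (s - 1) zs @ [zs ! (s - 1) * x]) \<odot> tt bb l i k (drop s zs)))"
      unfolding tt_cons[OF j]
      by (simp only: fmul_sum_left fmul_assoc fmul_diff_right sum_subtractf)
    finally show "f (Suc s) = \<dots>" .
  qed
  also have "\<dots> = (\<Sum>p\<in>{1..length bb}. t1 bb l h p y \<odot> RR bb l i k x p j zs)"
    unfolding RR_def fmul_sum_right by (rule sum.swap)
  also have "f 1 = tt bb l h j [] \<odot> tt bb l i k ((x * y) # zs) - tt bb l h j [y * x] \<odot> tt bb l i k zs"
    unfolding f_def by simp
  finally show ?thesis .
qed

lemma main:
  assumes i: "i \<in> {1..length bb}" and j: "j \<in> {1..length bb}" and k: "k \<in> {1..length bb}"
    and x: "x \<in> carrier_mat l l"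
  shows "ys \<noteq> [] \<Longrightarrow> (\<forall>y\<in>set ys. y \<in> carrier_mat l l) \<Longrightarrow> h \<in> {1..length bb} \<Longrightarrow>
    Ueq bb l (scomm ((-1)^((par bb i + par bb j)*(par bb h + par bb k))) (t1 bb l i j x) (tt bb l h k ys))
      (fsc ((-1)^(par bb i * par bb j + par bb i * par bb h + par bb j * par bb h)) (RR bb l i k x h j ys))"
proof (induction ys arbitrary: h)
  case Nil
  then show ?case by simp
next
  case (Cons y ys)
  have y: "y \<in> carrier_mat l l" using Cons.prems(2) by simp
  have h: "h \<in> {1..length bb}" by (rule Cons.prems(3))
  show ?case
  proof (cases "ys = []")
    case True
    have RRy: "RR bb l i k x h j [y] = fsc (of_bool (h = j)) fone \<odot> t1 bb l i k (x * y) - t1 bb l h j (y * x) \<odot> fsc (of_bool (i = k)) fone"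
      by (simp add: RR_def)
    show ?thesis unfolding True tt.simps(2) RRy by (rule baseA[OF i j h k x y])
  next
    case False
    have ysc: "\<forall>y\<in>set ys. y \<in> carrier_mat l l" using Cons.prems(2) by simp
    define S1 :: "nat \<Rightarrow> complex" where "S1 p = (-1)^((par bb i + par bb j) * (par bb h + par bb p))" for p
    define S2 :: "nat \<Rightarrow> complex" where "S2 p = (-1)^((par bb i + par bb j) * (par bb p + par bb k))" for p
    define \<sigma> :: "nat \<Rightarrow> complex" where "\<sigma> p = (-1)^(par bb i * par bb j + par bb i * par bb p + par bb j * par bb p)" for p
    define P where "P = {1..length bb}"
    have fP: "finite P" by (simp add: P_def)
    have iP: "i \<in> P" using i by (simp add: P_def)
    define X where "X = t1 bb l i j x"
    have eq1: "scomm ((-1)^((par bb i + par bb j)*(par bb h + par bb k))) X (tt bb l h k (y # ys))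
       = (\<Sum>p\<in>P. scomm (S1 p) X (t1 bb l h p y) \<odot> tt bb l p k ys + fsc (S1 p) (t1 bb l h p y \<odot> scomm (S2 p) X (tt bb l p k ys)))"
      unfolding tt_cons[OF k] scomm_sum_right P_def
    proof (rule sum.cong[OF refl])
      fix p
      show "scomm ((-1)^((par bb i + par bb j)*(par bb h + par bb k))) X (t1 bb l h p y \<odot> tt bb l p k ys)
         = scomm (S1 p) X (t1 bb l h p y) \<odot> tt bb l p k ys + fsc (S1 p) (t1 bb l h p y \<odot> scomm (S2 p) X (tt bb l p k ys))"
        unfolding sign3[of bb i j h k p] S1_def S2_def by (rule scomm_leibniz)
    qed
    define N where "N = (\<Sum>p\<in>P. fsc (\<sigma> h) (fsc (of_bool (h = j)) fone \<odot> t1 bb l i p (x * y) - t1 bb l h j (y * x) \<odot> fsc (of_bool (i = p)) fone) \<odot> tt bb l p k ys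
        + fsc (S1 p) (t1 bb l h p y \<odot> fsc (\<sigma> p) (RR bb l i k x p j ys)))"
    have ueq: "Ueq bb l (scomm ((-1)^((par bb i + par bb j)*(par bb h + par bb k))) X (tt bb l h k (y # ys))) N"
      unfolding eq1 N_def
    proof (rule Ueq_sum, rule Ueq_add)
      fix p assume p: "p \<in> P"
      then have p': "p \<in> {1..length bb}" by (simp add: P_def)
      show "Ueq bb l (scomm (S1 p) X (t1 bb l h p y) \<odot> tt bb l p k ys)
          (fsc (\<sigma> h) (fsc (of_bool (h = j)) fone \<odot> t1 bb l i p (x * y) - t1 bb l h j (y * x) \<odot> fsc (of_bool (i = p)) fone) \<odot> tt bb l p k ys)"
        by (rule Ueq_rmult[OF _ tt_falg[OF p' k]])
           (unfold S1_def \<sigma>_def X_def, rule baseA[OF i j h p' x y])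
      show "Ueq bb l (fsc (S1 p) (t1 bb l h p y \<odot> scomm (S2 p) X (tt bb l p k ys)))
          (fsc (S1 p) (t1 bb l h p y \<odot> fsc (\<sigma> p) (RR bb l i k x p j ys)))"
        by (rule Ueq_fsc, rule Ueq_lmult[OF _ t1_falg[OF h p']])
           (unfold S2_def \<sigma>_def X_def, rule Cons.IH[OF False ysc p'])
    qed
    have A: "(\<Sum>p\<in>P. (fsc (of_bool (h = j)) fone \<odot> t1 bb l i p (x * y) - t1 bb l h j (y * x) \<odot> fsc (of_bool (i = p)) fone) \<odot> tt bb l p k ys)
       = tt bb l h j [] \<odot> tt bb l i k ((x * y) # ys) - tt bb l h j [y * x] \<odot> tt bb l i k ys"
    proof -
      have "(\<Sum>p\<in>P. (fsc (of_bool (h = j)) fone \<odot> t1 bb l i p (x * y) - t1 bb l h j (y * x) \<odot> fsc (of_bool (i = p)) fone) \<odot> tt bb l p k ys)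
        = (\<Sum>p\<in>P. fsc (of_bool (h = j)) (t1 bb l i p (x * y) \<odot> tt bb l p k ys)) - (\<Sum>p\<in>P. fsc (of_bool (i = p)) (t1 bb l h j (y * x) \<odot> tt bb l p k ys))"
        by (simp only: fmul_fsc_left fmul_fsc_right fone_left fone_right fmul_diff_left sum_subtractf)
      also have "(\<Sum>p\<in>P. fsc (of_bool (i = p)) (t1 bb l h j (y * x) \<odot> tt bb l p k ys)) = t1 bb l h j (y * x) \<odot> tt bb l i k ys"
        using fP iP by (simp add: fsc_of_bool)
      also have "(\<Sum>p\<in>P. fsc (of_bool (h = j)) (t1 bb l i p (x * y) \<odot> tt bb l p k ys)) = fsc (of_bool (h = j)) (tt bb l i k ((x * y) # ys))"
        unfolding tt_cons[OF k] P_def by (simp only: fsc_sum)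
      finally show ?thesis by (simp only: tt.simps fmul_fsc_left fone_left)
    qed
    have B: "(\<Sum>p\<in>P. fsc (S1 p) (t1 bb l h p y \<odot> fsc (\<sigma> p) (RR bb l i k x p j ys)))
       = fsc (\<sigma> h) (\<Sum>p\<in>P. t1 bb l h p y \<odot> RR bb l i k x p j ys)"
      unfolding fsc_sum
    proof (rule sum.cong[OF refl])
      fix p
      show "fsc (S1 p) (t1 bb l h p y \<odot> fsc (\<sigma> p) (RR bb l i k x p j ys)) = fsc (\<sigma> h) (t1 bb l h p y \<odot> RR bb l i k x p j ys)"
        unfolding fmul_fsc_right fsc_fsc S1_def \<sigma>_def sign4 ..
    qed
    have "N = fsc (\<sigma> h) (\<Sum>p\<in>P. (fsc (of_bool (h = j)) fone \<odot> t1 bb l i p (x * y) - t1 bb l h j (y * x) \<odot> fsc (of_bool (i = p)) fone) \<odot> tt bb l p k ys)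
        + (\<Sum>p\<in>P. fsc (S1 p) (t1 bb l h p y \<odot> fsc (\<sigma> p) (RR bb l i k x p j ys)))"
      unfolding N_def by (simp only: sum.distrib fmul_fsc_left fsc_sum)
    also have "\<dots> = fsc (\<sigma> h) (RR bb l i k x h j (y # ys))"
      unfolding A B unfolding RR_cons[OF j] P_def[symmetric] by (simp only: fsc_add)
    finally have "N = fsc (\<sigma> h) (RR bb l i k x h j (y # ys))" .
    then show ?thesis using ueq unfolding X_def \<sigma>_def by simp
  qed
qed

theorem lemma4p1:
  fixes m n l :: nat and bb :: "bsym list" and i j h k :: nat
    and x :: "complex mat" and ys :: "complex mat list"
  assumes "length bb = m + n" and "count_list bb Dl = m" and "count_list bb Ep = n"
    and "i \<in> {1..m+n}" and "j \<in> {1..m+n}" and "h \<in> {1..m+n}" and "k \<in> {1..m+n}"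
    and "ys \<noteq> []"
    and "x \<in> carrier_mat l l" and "\<forall>y\<in>set ys. y \<in> carrier_mat l l"
  shows "Ueq bb l
    (scomm ((-1) ^ ((par bb i + par bb j) * (par bb h + par bb k)))
       (tt bb l i j [x]) (tt bb l h k ys))
    (fsc ((-1) ^ (par bb i * par bb j + par bb i * par bb h + par bb j * par bb h))
       (\<Sum>s\<in>{1..length ys}.
          tt bb l h j (take (s - 1) ys) \<odot> tt bb l i k ((x * ys ! (s - 1)) # drop s ys)
        - tt bb l h j (take (s - 1) ys @ [ys ! (s - 1) * x]) \<odot> tt bb l i k (drop s ys)))"
  proof -
  have L: "length bb = m + n" by (rule assms(1))
  have i: "i \<in> {1..length bb}" and j: "j \<in> {1..length bb}" and h: "h \<in> {1..length bb}" and k: "k \<in> {1..length bb}"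
    using assms(4-7) unfolding L by simp_all
  have "Ueq bb l (scomm ((-1)^((par bb i + par bb j)*(par bb h + par bb k))) (t1 bb l i j x) (tt bb l h k ys))
      (fsc ((-1)^(par bb i * par bb j + par bb i * par bb h + par bb j * par bb h)) (RR bb l i k x h j ys))"
    by (rule main[OF i j k assms(9) assms(8) assms(10) h])
  then show ?thesis unfolding RR_def by (simp only: tt.simps(2))
qed

end
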